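(* If $K$ is a compact line and $(F_i)_{i\in I}$ is a weak*-null family in $\mathrm{NBV}(K)$, then $(F_i)_{i\in I}$ is of type $c_0\ell_1$ over every countable subset of $K$.
   Context: A compact line is a totally ordered set which is compact in its order topology. $\mathrm{NBV}(K)$ is the space of right-continuous real maps of bounded variation on $K$, identified with $C(K)^*$ via $F_\mu(t)=\mu([\min K,t])$. $\lim_{i\in I}a_i=0$ means $\{i:|a_i|\ge\varepsilon\}$ is finite for every $\varepsilon>0$. $(F_i)$ is weak*-null if $\lim_i\int f\,d\mu_i=0$ for all $f\in C(K)$, $\mu_i$ the measure associated to $F_i$. $(F_i)$ is of type $c_0\ell_1$ over $Q\subseteq K$ if $F_i(t)=a_{i,t}+b_{i,t}$ ($i\in I$, $t\in Q$) with $\lim_ia_{i,t}=0$ for each $t\in Q$ and $\sup_i\sum_{t\in Q}|b_{i,t}|<\infty$. *)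

theory Defs
  imports "HOL-Analysis.Analysis"
begin

definition compact_line :: "'k::linorder_topology itself \<Rightarrow> bool" where
  "compact_line _ \<longleftrightarrow> compact (UNIV :: 'k set)"

text \<open>Limit of a family along the cofinite filter as in the paper:
  for every eps > 0 only finitely many entries have absolute value at least eps.\<close>
definition family_null :: "('i \<Rightarrow> real) \<Rightarrow> bool" where
  "family_null a \<longleftrightarrow> (\<forall>e>0. finite {i. e \<le> \<bar>a i\<bar>})"

definition bounded_variation :: "('k::linorder \<Rightarrow> real) \<Rightarrow> bool" where
  "bounded_variation F \<longleftrightarrow>
     (\<exists>C. \<forall>xs. sorted xs \<longrightarrow> (\<Sum>k<length xs - 1. \<bar>F (xs ! Suc k) - F (xs ! k)\<bar>) \<le> C)"

definition NBV :: "('k::linorder_topology \<Rightarrow> real) set" where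
  "NBV = {F. bounded_variation F \<and> (\<forall>t. (F \<longlongrightarrow> F t) (at_right t))}"

definition finite_radon :: "'k::topological_space measure \<Rightarrow> bool" where
  "finite_radon M \<longleftrightarrow> sets M = sets borel \<and> finite_measure M \<and>
     (\<forall>A \<in> sets borel. emeasure M A = (SUP C\<in>{C. compact C \<and> C \<subseteq> A}. emeasure M C))"

text \<open>A signed Radon measure is represented as a pair (mu+, mu-) of finite Radon measures
  (Jordan decomposition); its distribution function is F(t) = mu([min K, t]) = mu({..t}).\<close>
definition dist_fun :: "'k::linorder_topology measure \<times> 'k measure \<Rightarrow> 'k \<Rightarrow> real" where
  "dist_fun \<mu> t = measure (fst \<mu>) {..t} - measure (snd \<mu>) {..t}"

definition sintegral :: "'k::topological_space measure \<times> 'k measure \<Rightarrow> ('k \<Rightarrow> real) \<Rightarrow> real" where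
  "sintegral \<mu> f = integral\<^sup>L (fst \<mu>) f - integral\<^sup>L (snd \<mu>) f"

text \<open>(F_i) weak*-null, mu_i the measure associated to F_i.\<close>
definition weak_star_null :: "('i \<Rightarrow> 'k::linorder_topology measure \<times> 'k measure) \<Rightarrow> bool" where
  "weak_star_null \<mu> \<longleftrightarrow> (\<forall>f::'k \<Rightarrow> real. continuous_on UNIV f \<longrightarrow> family_null (\<lambda>i. sintegral (\<mu> i) f))"

definition type_c0l1 :: "('i \<Rightarrow> 'k \<Rightarrow> real) \<Rightarrow> 'k set \<Rightarrow> bool" where
  "type_c0l1 F Q \<longleftrightarrow> (\<exists>a b :: 'i \<Rightarrow> 'k \<Rightarrow> real.
     (\<forall>i. \<forall>t\<in>Q. F i t = a i t + b i t) \<and>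
     (\<forall>t\<in>Q. family_null (\<lambda>i. a i t)) \<and>
     (\<exists>C. \<forall>i. (\<lambda>t. \<bar>b i t\<bar>) summable_on Q \<and> (\<Sum>\<^sub>\<infinity>t\<in>Q. \<bar>b i t\<bar>) \<le> C))"

end

theory Submission
  imports Defs
begin


lemma bcf_complete: "complete (UNIV :: ('a::topological_space \<Rightarrow>\<^sub>C real) set)"
proof (rule completeI)
  fix f :: "nat \<Rightarrow> ('a, real) bcontfun"
  assume "\<forall>n. f n \<in> UNIV" "Cauchy f"
  then obtain g where "uniform_limit UNIV f g sequentially"
    using uniformly_convergent_eq_cauchy[of "\<lambda>_. True" f]
    unfolding Cauchy_def uniform_limit_sequentially_iff
    by (metis dist_fun_lt_imp_dist_val_lt)
  from uniform_limit_bcontfunE[OF this sequentially_bot]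
  obtain l' where "g = apply_bcontfun l'" "(f \<longlonglongrightarrow> l')" by metis
  then show "\<exists>l\<in>UNIV. f \<longlonglongrightarrow> l" by blast
qed

lemma ubp:
  fixes L :: "'i \<Rightarrow> ('a::topological_space \<Rightarrow>\<^sub>C real) \<Rightarrow> real"
  assumes lin: "\<And>i. bounded_linear (L i)"
    and pb: "\<And>x. \<exists>B. \<forall>i. \<bar>L i x\<bar> \<le> B"
  shows "\<exists>M. \<forall>i x. \<bar>L i x\<bar> \<le> M * norm x"
proof -
  define A where "A n = {x. \<forall>i. \<bar>L i x\<bar> \<le> real n}" for n :: nat
  have clA: "closed (A n)" for n
  proof -
    have "A n = (\<Inter>i. {x. \<bar>L i x\<bar> \<le> real n})" unfolding A_def by auto
    moreover have "closed {x. \<bar>L i x\<bar> \<le> real n}" for i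
      by (intro closed_Collect_le continuous_intros linear_continuous_on lin)
    ultimately show ?thesis by auto
  qed
  have unA: "(\<Union>n. A n) = UNIV"
  proof -
    have "x \<in> (\<Union>n. A n)" for x
    proof -
      obtain B where B: "\<forall>i. \<bar>L i x\<bar> \<le> B" using pb by blast
      obtain n :: nat where "B \<le> real n" using real_arch_simple by blast
      then have "x \<in> A n" using B unfolding A_def by (auto intro: order_trans)
      then show ?thesis by blast
    qed
    then show ?thesis by blast
  qed
  have "\<exists>n. interior (A n) \<noteq> {}"
  proof (rule ccontr)
    assume "\<not> ?thesis"
    then have "Met_TC.mtopology interior_of \<Union>(range A) = {}"
      by (intro Met_TC.metric_Baire_category_alt) (auto simp: bcf_complete clA)
    then show False using unA by simp
  qed
  then obtain n x0 where "x0 \<in> interior (A n)" by blast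
  then obtain r where r: "r > 0" "ball x0 r \<subseteq> A n" using mem_interior by blast
  have "\<bar>L i y\<bar> \<le> (4 * real n / r) * norm y" for i y
  proof (cases "y = 0")
    case True then show ?thesis using lin[of i] by (simp add: linear_simps)
  next
    case False
    define c where "c = r / 2 / norm y"
    have c: "c > 0" using r False by (simp add: c_def)
    have "x0 + c *\<^sub>R y \<in> ball x0 r" using r False by (simp add: c_def dist_norm)
    then have z: "\<bar>L i (x0 + c *\<^sub>R y)\<bar> \<le> real n" using r unfolding A_def by blast
    have x: "\<bar>L i x0\<bar> \<le> real n" using r centre_in_ball[of x0 r] unfolding A_def by blast
    have "L i (x0 + c *\<^sub>R y) = L i x0 + c * L i y"
      using lin[of i] by (simp add: linear_simps)
    then have "c * \<bar>L i y\<bar> \<le> 2 * real n" using z x c by (simp add: abs_mult)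
    then have "\<bar>L i y\<bar> \<le> 2 * real n / c" using c by (simp add: field_simps)
    also have "2 * real n / c = (4 * real n / r) * norm y" using r False by (simp add: c_def field_simps)
    finally show ?thesis .
  qed
  then show ?thesis by blast
qed



lemma decomp:
  fixes F :: "'i \<Rightarrow> 'k \<Rightarrow> real"
  assumes C0: "C \<ge> 0" and fin: "\<And>T. finite T \<Longrightarrow> finite {i. C < (\<Sum>t\<in>T. \<bar>F i t\<bar>)}"
    and Q: "countable Q"
  shows "type_c0l1 F Q"
proof (cases "Q = {}")
  case True
  then show ?thesis unfolding type_c0l1_def by (intro exI[of _ F] exI[of _ F]) auto
next
  case False
  define e where "e = from_nat_into Q"
  define Tn where "Tn n = e ` {..<n}" for n
  define E where "E n = {i. C < (\<Sum>t\<in>Tn n. \<bar>F i t\<bar>)}" for n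
  define N where "N t = Suc (to_nat_on Q t)" for t
  define b where "b i t = (if i \<in> E (N t) then 0 else F i t)" for i t
  define a where "a i t = (if i \<in> E (N t) then F i t else 0)" for i t
  have finE: "finite (E n)" for n unfolding E_def Tn_def by (rule fin) simp
  have sum_b: "(\<Sum>t\<in>S. \<bar>b i t\<bar>) \<le> C" if S: "finite S" "S \<subseteq> Q" for S i
  proof -
    define S' where "S' = {t\<in>S. i \<notin> E (N t)}"
    have "(\<Sum>t\<in>S. \<bar>b i t\<bar>) = (\<Sum>t\<in>S'. \<bar>F i t\<bar>)"
      unfolding S'_def b_def using S(1) by (intro sum.mono_neutral_cong_right) auto
    also have "\<dots> \<le> C"
    proof (cases "S' = {}")
      case True then show ?thesis using C0 by simp
    next
      case False
      have fS': "finite S'" using S(1) unfolding S'_def by simp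
      define m where "m = Max (N ` S')"
      have "m \<in> N ` S'" unfolding m_def using fS' False by (intro Max_in) auto
      then obtain t0 where t0: "t0 \<in> S'" "m = N t0" by blast
      then have nE: "i \<notin> E m" unfolding S'_def by simp
      have sub: "S' \<subseteq> Tn m"
      proof
        fix t assume t: "t \<in> S'"
        then have tQ: "t \<in> Q" using S unfolding S'_def by auto
        have "N t \<le> m" unfolding m_def using fS' t by simp
        then have "to_nat_on Q t \<in> {..<m}" unfolding N_def by simp
        moreover have "e (to_nat_on Q t) = t" unfolding e_def using Q tQ by simp
        ultimately show "t \<in> Tn m" unfolding Tn_def by force
      qed
      have "(\<Sum>t\<in>S'. \<bar>F i t\<bar>) \<le> (\<Sum>t\<in>Tn m. \<bar>F i t\<bar>)"
        by (rule sum_mono2) (use sub in \<open>auto simp: Tn_def\<close>)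
      also have "\<dots> \<le> C" using nE unfolding E_def by simp
      finally show ?thesis .
    qed
    finally show ?thesis .
  qed
  show ?thesis unfolding type_c0l1_def
  proof (rule exI[of _ a], rule exI[of _ b], intro conjI)
    show "\<forall>i. \<forall>t\<in>Q. F i t = a i t + b i t" unfolding a_def b_def by simp
    show "\<forall>t\<in>Q. family_null (\<lambda>i. a i t)"
      unfolding family_null_def
    proof (intro allI impI ballI)
      fix t r
      fix r :: real assume "r > 0"
      then have "{i. r \<le> \<bar>a i t\<bar>} \<subseteq> E (N t)" unfolding a_def by auto
      then show "finite {i. r \<le> \<bar>a i t\<bar>}" using finE finite_subset by blast
    qed
    show "\<exists>C. \<forall>i. (\<lambda>t. \<bar>b i t\<bar>) summable_on Q \<and> (\<Sum>\<^sub>\<infinity>t\<in>Q. \<bar>b i t\<bar>) \<le> C"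
    proof (intro exI[of _ C] allI conjI)
    fix i
    show sm: "(\<lambda>t. \<bar>b i t\<bar>) summable_on Q"
      by (rule nonneg_bdd_above_summable_on) (use sum_b in \<open>auto simp: bdd_above_def\<close>)
    show "(\<Sum>\<^sub>\<infinity>t\<in>Q. \<bar>b i t\<bar>) \<le> C"
      by (rule infsum_le_finite_sums[OF sm]) (use sum_b in auto)
  qed
  qed
qed



lemma urysohn_line:
  fixes t s :: "'k::linorder_topology"
  assumes cpt: "compact (UNIV :: 'k set)" and ts: "t < s"
  obtains f :: "'k \<Rightarrow> real" where "continuous_on UNIV f" "\<And>x. 0 \<le> f x \<and> f x \<le> 1"
    "\<And>x. x \<le> t \<Longrightarrow> f x = 1" "\<And>x. s \<le> x \<Longrightarrow> f x = 0"
proof -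
  have H: "Hausdorff_space (euclidean :: 'k topology)"
    unfolding Hausdorff_space_def using separation_t2 by (auto simp: disjnt_def)
  have C: "compact_space (euclidean :: 'k topology)"
    using cpt by (simp add: compact_space_def)
  have N: "normal_space (euclidean :: 'k topology)"
    using compact_Hausdorff_or_regular_imp_normal_space H C by blast
  obtain f where f: "continuous_map euclidean (top_of_set {0..1::real}) f"
      "f ` {s..} \<subseteq> {0}" "f ` {..t} \<subseteq> {1}"
  proof (rule Urysohn_lemma[OF N, of "{s..}" "{..t}" 0 1])
    show "disjnt {s..} {..t}" using ts by (auto simp: disjnt_def)
  qed (simp_all add: closed_atLeast closed_atMost)
  have c: "continuous_on UNIV f" "\<And>x. f x \<in> {0..1}"
    using f(1) by (auto simp: continuous_map_in_subtopology)
  show ?thesis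
  proof (rule that[OF c(1)])
    show "0 \<le> f x \<and> f x \<le> 1" for x using c(2)[of x] by simp
    show "f x = 1" if "x \<le> t" for x using f(3) that by auto
    show "f x = 0" if "s \<le> x" for x using f(2) that by auto
  qed
qed



lemma fr_basic:
  assumes "finite_radon (\<nu> :: 'k::linorder_topology measure)"
  shows "finite_measure \<nu>" "sets \<nu> = sets borel" "space \<nu> = UNIV"
  using assms unfolding finite_radon_def
  by (auto dest: sets_eq_imp_space_eq)

lemma fr_sets: "finite_radon (\<nu> :: 'k::linorder_topology measure) \<Longrightarrow> A \<in> sets borel \<Longrightarrow> A \<in> sets \<nu>"
  using fr_basic(2) by blast

lemma fr_int:
  fixes f :: "'k::linorder_topology \<Rightarrow> real"
  assumes fr: "finite_radon \<nu>" and cpt: "compact (UNIV :: 'k set)" and f: "continuous_on UNIV f"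
  shows "integrable \<nu> f"
proof -
  interpret finite_measure \<nu> using fr_basic(1)[OF fr] .
  have "compact (range f)" using compact_continuous_image[OF f cpt] .
  then obtain B where B: "\<forall>x\<in>range f. norm x \<le> B" using compact_imp_bounded bounded_iff by metis
  have m: "f \<in> borel_measurable \<nu>"
    using borel_measurable_continuous_onI[OF f] measurable_cong_sets[OF fr_basic(2)[OF fr] refl] by blast
  show ?thesis by (rule integrable_const_bound[where B=B]) (use B m in auto)
qed

lemma fr_int_bound:
  fixes f :: "'k::linorder_topology \<Rightarrow> real"
  assumes fr: "finite_radon \<nu>" and int: "integrable \<nu> f" and B: "\<And>x. \<bar>f x\<bar> \<le> B"
  shows "\<bar>integral\<^sup>L \<nu> f\<bar> \<le> B * measure \<nu> UNIV"
proof -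
  interpret finite_measure \<nu> using fr_basic(1)[OF fr] .
  have "\<bar>integral\<^sup>L \<nu> f\<bar> \<le> integral\<^sup>L \<nu> (\<lambda>x. \<bar>f x\<bar>)" by (rule integral_abs_bound)
  also have "\<dots> \<le> integral\<^sup>L \<nu> (\<lambda>x. B)"
    by (rule integral_mono) (use int B in auto)
  also have "\<dots> = B * measure \<nu> UNIV" using fr_basic(3)[OF fr] by simp
  finally show ?thesis .
qed

lemma fr_right:
  fixes t u :: "'k::linorder_topology"
  assumes fr: "finite_radon \<nu>" and tu: "t < u" and e: "e > 0"
  shows "\<exists>c. t < c \<and> c \<le> u \<and> measure \<nu> {t<..<c} < e"
proof -
  interpret finite_measure \<nu> using fr_basic(1)[OF fr] .
  define A where "A = {t<..}"
  have Ab: "A \<in> sets borel" unfolding A_def by simp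
  have As: "A \<in> sets \<nu>" using fr_sets[OF fr Ab] .
  show ?thesis
  proof (cases "measure \<nu> A < e")
    case True
    have "measure \<nu> {t<..<u} \<le> measure \<nu> A" by (rule finite_measure_mono) (use As in \<open>auto simp: A_def\<close>)
    then show ?thesis using True tu by (intro exI[of _ u]) auto
  next
    case False
    note nA = False
    have "emeasure \<nu> A = (SUP C\<in>{C. compact C \<and> C \<subseteq> A}. emeasure \<nu> C)"
      using fr Ab unfolding finite_radon_def by blast
    moreover have "ennreal (measure \<nu> A - e) < emeasure \<nu> A"
      using e False by (simp add: emeasure_eq_measure ennreal_lessI)
    ultimately obtain C where C: "compact C" "C \<subseteq> A" "ennreal (measure \<nu> A - e) < emeasure \<nu> C"
      by (metis (no_types, lifting) less_SUP_iff mem_Collect_eq)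
    have Cs: "C \<in> sets \<nu>" using fr_sets[OF fr] C(1) by (simp add: compact_imp_closed)
    have mC: "measure \<nu> A - e < measure \<nu> C"
      using C(3) False e by (simp add: emeasure_eq_measure ennreal_less_iff)
    show ?thesis
    proof (cases "C = {}")
      case True then show ?thesis using mC e nA by simp
    next
      case False
      obtain c0 where c0: "c0 \<in> C" "\<forall>y\<in>C. c0 \<le> y" using compact_attains_inf[OF C(1) False] by blast
      define c where "c = min c0 u"
      have tc: "t < c" using c0 C(2) tu unfolding c_def A_def by auto
      have sub: "{t<..<c} \<subseteq> A - C" using c0 unfolding c_def A_def by force
      have "measure \<nu> {t<..<c} \<le> measure \<nu> (A - C)"
        by (rule finite_measure_mono[OF sub]) (use As Cs in auto)
      also have "\<dots> = measure \<nu> A - measure \<nu> C"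
        by (rule finite_measure_Diff) (use As Cs C(2) in auto)
      finally show ?thesis using mC tc by (intro exI[of _ c]) (auto simp: c_def)
    qed
  qed
qed

lemma fr_est:
  fixes g :: "'k::linorder_topology \<Rightarrow> real"
  assumes fr: "finite_radon \<nu>" and cpt: "compact (UNIV :: 'k set)" and g: "continuous_on UNIV g"
    and g01: "\<And>x. 0 \<le> g x \<and> g x \<le> 1" and g1: "\<And>x. x \<le> t \<Longrightarrow> g x = 1"
    and g0: "\<And>x. c \<le> x \<Longrightarrow> g x = 0"
  shows "\<bar>integral\<^sup>L \<nu> g - measure \<nu> {..t}\<bar> \<le> measure \<nu> {t<..<c}"
proof -
  interpret finite_measure \<nu> using fr_basic(1)[OF fr] .
  have s1: "{..t} \<in> sets \<nu>" and s2: "{t<..<c} \<in> sets \<nu>" using fr_sets[OF fr] by auto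
  have ig: "integrable \<nu> g" using fr_int[OF fr cpt g] .
  have i1: "integrable \<nu> (indicator {..t} :: 'k \<Rightarrow> real)" using s1 by (simp add: emeasure_eq_measure)
  have i2: "integrable \<nu> (indicator {t<..<c} :: 'k \<Rightarrow> real)" using s2 by (simp add: emeasure_eq_measure)
  have m1: "measure \<nu> {..t} = integral\<^sup>L \<nu> (indicator {..t})" using fr_basic(3)[OF fr] by simp
  have m2: "measure \<nu> {t<..<c} = integral\<^sup>L \<nu> (indicator {t<..<c})" using fr_basic(3)[OF fr] by simp
  have pw: "0 \<le> g x - indicator {..t} x \<and> g x - indicator {..t} x \<le> indicator {t<..<c} x" for x
    using g01[of x] g1[of x] g0[of x] by (cases "x \<le> t"; cases "c \<le> x") (auto simp: indicator_def not_le)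
  have "0 \<le> integral\<^sup>L \<nu> (\<lambda>x. g x - indicator {..t} x)"
    using pw by (intro integral_nonneg_AE) auto
  moreover have "integral\<^sup>L \<nu> (\<lambda>x. g x - indicator {..t} x) \<le> integral\<^sup>L \<nu> (indicator {t<..<c})"
    using pw by (intro integral_mono Bochner_Integration.integrable_diff ig i1 i2) auto
  moreover have "integral\<^sup>L \<nu> (\<lambda>x. g x - indicator {..t} x) = integral\<^sup>L \<nu> g - measure \<nu> {..t}"
    using ig i1 m1 by simp
  ultimately show ?thesis using m2 by simp
qed


context
  fixes \<mu> :: "'k::linorder_topology measure \<times> 'k measure"
  assumes fr1: "finite_radon (fst \<mu>)" and fr2: "finite_radon (snd \<mu>)"
    and cpt: "compact (UNIV :: 'k set)"
begin

lemma sint_diff: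
  assumes "continuous_on UNIV f" "continuous_on UNIV g"
  shows "sintegral \<mu> (\<lambda>x. f x - g x) = sintegral \<mu> f - sintegral \<mu> g"
  using fr_int[OF fr1 cpt assms(1)] fr_int[OF fr1 cpt assms(2)]
    fr_int[OF fr2 cpt assms(1)] fr_int[OF fr2 cpt assms(2)]
  unfolding sintegral_def by simp

lemma sint_add:
  assumes "continuous_on UNIV f" "continuous_on UNIV g"
  shows "sintegral \<mu> (\<lambda>x. f x + g x) = sintegral \<mu> f + sintegral \<mu> g"
  using fr_int[OF fr1 cpt assms(1)] fr_int[OF fr1 cpt assms(2)]
    fr_int[OF fr2 cpt assms(1)] fr_int[OF fr2 cpt assms(2)]
  unfolding sintegral_def by simp

lemma sint_cmult:
  shows "sintegral \<mu> (\<lambda>x. c * f x) = c * sintegral \<mu> f"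
  unfolding sintegral_def by (simp add: right_diff_distrib)

lemma sint_sum:
  assumes "\<And>t. t \<in> T \<Longrightarrow> continuous_on UNIV (h t)"
  shows "sintegral \<mu> (\<lambda>x. \<Sum>t\<in>T. c t * h t x) = (\<Sum>t\<in>T. c t * sintegral \<mu> (h t))"
proof -
  have i1: "integrable (fst \<mu>) (\<lambda>x. c t * h t x)" if "t \<in> T" for t
    using fr_int[OF fr1 cpt assms[OF that]] by simp
  have i2: "integrable (snd \<mu>) (\<lambda>x. c t * h t x)" if "t \<in> T" for t
    using fr_int[OF fr2 cpt assms[OF that]] by simp
  show ?thesis unfolding sintegral_def
    by (simp add: Bochner_Integration.integral_sum[OF i1] Bochner_Integration.integral_sum[OF i2] sum_subtractf right_diff_distrib)
qed

lemma sint_bound: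
  assumes "continuous_on UNIV h" "\<And>x. \<bar>h x\<bar> \<le> B"
  shows "\<bar>sintegral \<mu> h\<bar> \<le> B * (measure (fst \<mu>) UNIV + measure (snd \<mu>) UNIV)"
  using fr_int_bound[OF fr1 fr_int[OF fr1 cpt assms(1)] assms(2)]
    fr_int_bound[OF fr2 fr_int[OF fr2 cpt assms(1)] assms(2)]
  unfolding sintegral_def by (simp add: distrib_left)

end

lemma ubound:
  fixes \<mu> :: "'i \<Rightarrow> 'k::linorder_topology measure \<times> 'k measure"
  assumes cpt: "compact (UNIV :: 'k set)"
    and fr: "\<And>i. finite_radon (fst (\<mu> i)) \<and> finite_radon (snd (\<mu> i))"
    and wsn: "weak_star_null \<mu>"
  shows "\<exists>M\<ge>0. \<forall>i h. continuous_on UNIV h \<longrightarrow> (\<forall>x. \<bar>h x\<bar> \<le> 1) \<longrightarrow> \<bar>sintegral (\<mu> i) h\<bar> \<le> M"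
proof -
  define L where "L i g = sintegral (\<mu> i) (apply_bcontfun g)" for i and g :: "'k \<Rightarrow>\<^sub>C real"
  have bl: "bounded_linear (L i)" for i
  proof (rule bounded_linear_intro)
    note f1 = conjunct1[OF fr[of i]] and f2 = conjunct2[OF fr[of i]]
    show "L i (x + y) = L i x + L i y" for x y
      unfolding L_def using sint_add[OF f1 f2 cpt] by simp
    show "L i (r *\<^sub>R x) = r *\<^sub>R L i x" for r x
      unfolding L_def using sint_cmult[OF f1 f2 cpt] by simp
    show "norm (L i x) \<le> norm x * (measure (fst (\<mu> i)) UNIV + measure (snd (\<mu> i)) UNIV)" for x
      unfolding L_def using sint_bound[OF f1 f2 cpt, of "apply_bcontfun x" "norm x"] norm_bounded[of x]
      by simp
  qed
  have pb: "\<exists>B. \<forall>i. \<bar>L i g\<bar> \<le> B" for g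
  proof -
    define S where "S = {i. 1 \<le> \<bar>L i g\<bar>}"
    have "finite S" using wsn unfolding weak_star_null_def family_null_def S_def L_def
      by (metis continuous_on_apply_bcontfun zero_less_one)
    then have "\<bar>L i g\<bar> \<le> 1 + (\<Sum>j\<in>S. \<bar>L j g\<bar>)" for i
    proof (cases "i \<in> S")
      case True
      then have "\<bar>L i g\<bar> \<le> (\<Sum>j\<in>S. \<bar>L j g\<bar>)" using \<open>finite S\<close> by (intro member_le_sum) auto
      then show ?thesis by simp
    next
      case False
      then have "\<bar>L i g\<bar> < 1" unfolding S_def by simp
      moreover have "0 \<le> (\<Sum>j\<in>S. \<bar>L j g\<bar>)" by (intro sum_nonneg) auto
      ultimately show ?thesis by linarith
    qed
    then show ?thesis by blast
  qed
  obtain M where M: "\<forall>i x. \<bar>L i x\<bar> \<le> M * norm x" using ubp[OF bl pb] by blast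
  show ?thesis
  proof (intro exI[of _ "max M 0"] conjI allI impI)
    fix i and h :: "'k \<Rightarrow> real" assume h: "continuous_on UNIV h" "\<forall>x. \<bar>h x\<bar> \<le> (1::real)"
    have hb: "h \<in> bcontfun" using h by (intro bcontfun_normI[where b=1]) auto
    have ap: "apply_bcontfun (Bcontfun h) = h" using hb by (simp add: Bcontfun_inverse)
    have n: "norm (Bcontfun h) \<le> 1" by (rule norm_bound) (use h ap in auto)
    have "\<bar>sintegral (\<mu> i) h\<bar> = \<bar>L i (Bcontfun h)\<bar>" unfolding L_def ap ..
    also have "\<dots> \<le> M * norm (Bcontfun h)" using M by blast
    also have "\<dots> \<le> max M 0"
      using n by (cases "M \<ge> 0") (auto intro: mult_left_le order_trans[OF mult_nonpos_nonneg])
    finally show "\<bar>sintegral (\<mu> i) h\<bar> \<le> max M 0" .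
  qed simp
qed



lemma finT:
  fixes F :: "'i \<Rightarrow> 'k::linorder_topology \<Rightarrow> real"
    and \<mu> :: "'i \<Rightarrow> 'k measure \<times> 'k measure"
  assumes cpt: "compact (UNIV :: 'k set)"
    and fr: "\<And>i. finite_radon (fst (\<mu> i)) \<and> finite_radon (snd (\<mu> i))"
    and Fd: "\<And>i. F i = dist_fun (\<mu> i)"
    and wsn: "weak_star_null \<mu>"
    and M: "\<And>i h. continuous_on UNIV h \<Longrightarrow> (\<forall>x. \<bar>h x\<bar> \<le> 1) \<Longrightarrow> \<bar>sintegral (\<mu> i) h\<bar> \<le> M"
    and T: "finite T"
  shows "finite {i. M + 2 < (\<Sum>t\<in>T. \<bar>F i t\<bar>)}"
proof -
  obtain top :: 'k where top: "\<And>x. x \<le> top"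
    using compact_attains_sup[OF cpt UNIV_not_empty] by blast
  define k where "k = card T"
  define \<delta> :: real where "\<delta> = 1 / (real k + 1)"
  have \<delta>0: "\<delta> > 0" unfolding \<delta>_def by simp
  have k\<delta>: "real k * \<delta> \<le> 1" unfolding \<delta>_def by (simp add: field_simps)
  define s where "s t = Min ({u\<in>T. t < u} \<union> {top})" for t
  have s_gt: "t < s t" if "t < top" for t
    unfolding s_def using that T by (subst Min_gr_iff) auto
  have s_le: "s t \<le> t'" if "t' \<in> T" "t < t'" for t t'
    unfolding s_def using that T by (intro Min_le) auto
  define Pf where "Pf t f \<longleftrightarrow> continuous_on UNIV f \<and> (\<forall>x. 0 \<le> f x \<and> f x \<le> (1::real)) \<and>
      (\<forall>x. x \<le> t \<longrightarrow> f x = 1) \<and> (t < top \<longrightarrow> (\<forall>x. s t \<le> x \<longrightarrow> f x = 0))" for t f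
  have "\<exists>f. Pf t f" for t
  proof (cases "t < top")
    case True
    obtain f :: "'k \<Rightarrow> real" where "continuous_on UNIV f" "\<And>x. 0 \<le> f x \<and> f x \<le> 1"
      "\<And>x. x \<le> t \<Longrightarrow> f x = 1" "\<And>x. s t \<le> x \<Longrightarrow> f x = 0"
      using urysohn_line[OF cpt s_gt[OF True]] by blast
    then show ?thesis unfolding Pf_def by blast
  next
    case False
    then show ?thesis unfolding Pf_def by (intro exI[of _ "\<lambda>_. 1"]) auto
  qed
  then obtain f where f: "\<And>t. Pf t (f t)" by metis
  have fc: "continuous_on UNIV (f t)" for t using f[of t] unfolding Pf_def by blast
  define E where "E = (\<Union>t\<in>T. {i. \<delta> \<le> \<bar>sintegral (\<mu> i) (f t)\<bar>})"
  have finE: "finite E" unfolding E_def using T wsn fc \<delta>0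
    unfolding weak_star_null_def family_null_def by blast
  have main: "(\<Sum>t\<in>T. \<bar>F i t\<bar>) \<le> M + 2" if iE: "i \<notin> E" for i
  proof -
    have f1: "finite_radon (fst (\<mu> i))" and f2: "finite_radon (snd (\<mu> i))" using fr by auto
    have G: "\<exists>g. continuous_on UNIV g \<and> (\<forall>x. 0 \<le> f t x - g x \<and> f t x - g x \<le> 1) \<and>
        (\<forall>x. x \<le> t \<longrightarrow> g x = f t x) \<and> (t < top \<longrightarrow> (\<forall>x. s t \<le> x \<longrightarrow> g x = f t x)) \<and>
        \<bar>F i t - sintegral (\<mu> i) g\<bar> \<le> \<delta>" for t
    proof (cases "t < top")
      case False
      then have tt: "\<And>x. x \<le> t" using top by (meson order.trans not_less)
      then have ft: "f t = (\<lambda>_. 1)" using f[of t] unfolding Pf_def by auto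
      have "{..t} = UNIV" using tt by auto
      then have "F i t = sintegral (\<mu> i) (f t)"
        unfolding Fd dist_fun_def sintegral_def ft using fr_basic(3)[OF f1] fr_basic(3)[OF f2] by simp
      then show ?thesis using fc[of t] \<delta>0 by (intro exI[of _ "f t"]) auto
    next
      case True
      have st: "t < s t" using s_gt[OF True] .
      obtain c1 where c1: "t < c1" "c1 \<le> s t" "measure (fst (\<mu> i)) {t<..<c1} < \<delta>/2"
        using fr_right[OF f1 st, of "\<delta>/2"] \<delta>0 by auto
      obtain c2 where c2: "t < c2" "c2 \<le> s t" "measure (snd (\<mu> i)) {t<..<c2} < \<delta>/2"
        using fr_right[OF f2 st, of "\<delta>/2"] \<delta>0 by auto
      define c where "c = min c1 c2"
      have tc: "t < c" "c \<le> s t" using c1 c2 unfolding c_def by (auto simp: min_le_iff_disj)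
      have m1: "measure (fst (\<mu> i)) {t<..<c} < \<delta>/2"
      proof -
        interpret finite_measure "fst (\<mu> i)" using fr_basic(1)[OF f1] .
        have "measure (fst (\<mu> i)) {t<..<c} \<le> measure (fst (\<mu> i)) {t<..<c1}"
          by (rule finite_measure_mono) (auto simp: c_def fr_sets[OF f1])
        then show ?thesis using c1 by simp
      qed
      have m2: "measure (snd (\<mu> i)) {t<..<c} < \<delta>/2"
      proof -
        interpret finite_measure "snd (\<mu> i)" using fr_basic(1)[OF f2] .
        have "measure (snd (\<mu> i)) {t<..<c} \<le> measure (snd (\<mu> i)) {t<..<c2}"
          by (rule finite_measure_mono) (auto simp: c_def fr_sets[OF f2])
        then show ?thesis using c2 by simp
      qed
      obtain u :: "'k \<Rightarrow> real" where u: "continuous_on UNIV u" "\<And>x. 0 \<le> u x \<and> u x \<le> 1"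
        "\<And>x. x \<le> t \<Longrightarrow> u x = 1" "\<And>x. c \<le> x \<Longrightarrow> u x = 0"
        using urysohn_line[OF cpt tc(1)] by blast
      define g where "g x = min (f t x) (u x)" for x
      have ft: "continuous_on UNIV (f t)" "\<And>x. 0 \<le> f t x \<and> f t x \<le> 1"
        "\<And>x. x \<le> t \<Longrightarrow> f t x = 1" "\<And>x. s t \<le> x \<Longrightarrow> f t x = 0"
        using f[of t] True unfolding Pf_def by auto
      have gc: "continuous_on UNIV g" unfolding g_def by (intro continuous_intros ft(1) u(1))
      have g01: "\<And>x. 0 \<le> g x \<and> g x \<le> 1" using ft(2) u(2) unfolding g_def by (simp add: min_def)
      have g1: "\<And>x. x \<le> t \<Longrightarrow> g x = 1" using ft(3) u(3) unfolding g_def by simp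
      have g0: "\<And>x. c \<le> x \<Longrightarrow> g x = 0" unfolding g_def by (metis ft(2) u(4) min.absorb2)
      have e1: "\<bar>integral\<^sup>L (fst (\<mu> i)) g - measure (fst (\<mu> i)) {..t}\<bar> \<le> measure (fst (\<mu> i)) {t<..<c}"
        by (rule fr_est[OF f1 cpt gc g01 g1 g0])
      have e2: "\<bar>integral\<^sup>L (snd (\<mu> i)) g - measure (snd (\<mu> i)) {..t}\<bar> \<le> measure (snd (\<mu> i)) {t<..<c}"
        by (rule fr_est[OF f2 cpt gc g01 g1 g0])
      have "\<bar>F i t - sintegral (\<mu> i) g\<bar> \<le> \<delta>"
        unfolding Fd dist_fun_def sintegral_def using e1 e2 m1 m2 by linarith
      moreover have "\<forall>x. 0 \<le> f t x - g x \<and> f t x - g x \<le> 1"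
      proof
        fix x show "0 \<le> f t x - g x \<and> f t x - g x \<le> 1"
          using ft(2)[of x] u(2)[of x] unfolding g_def by (auto simp: min_def)
      qed
      moreover have "\<forall>x. x \<le> t \<longrightarrow> g x = f t x" using g1 ft(3) by simp
      moreover have "\<forall>x. s t \<le> x \<longrightarrow> g x = f t x"
        using g0 ft(4) tc(2) by (metis order.trans)
      ultimately show ?thesis using gc by blast
    qed
    then obtain G where G: "\<And>t. continuous_on UNIV (G t) \<and> (\<forall>x. 0 \<le> f t x - G t x \<and> f t x - G t x \<le> 1) \<and>
        (\<forall>x. x \<le> t \<longrightarrow> G t x = f t x) \<and> (t < top \<longrightarrow> (\<forall>x. s t \<le> x \<longrightarrow> G t x = f t x)) \<and>
        \<bar>F i t - sintegral (\<mu> i) (G t)\<bar> \<le> \<delta>" by metis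
    define D where "D t x = f t x - G t x" for t x
    have Dc: "continuous_on UNIV (D t)" for t unfolding D_def using fc[of t] G[of t]
      by (intro continuous_intros) auto
    define d where "d t = sintegral (\<mu> i) (D t)" for t
    define h where "h x = (\<Sum>t\<in>T. sgn (d t) * D t x)" for x
    have hc: "continuous_on UNIV h" unfolding h_def by (intro continuous_intros Dc)
    have nz: "t < x \<and> x < s t" if "D t x \<noteq> 0" for t x
    proof -
      have "\<not> x \<le> t" using that G[of t] unfolding D_def by auto
      then have tx: "t < x" by simp
      then have "t < top" using top[of x] by (meson order.strict_trans2)
      then have "\<not> s t \<le> x" using that G[of t] unfolding D_def by auto
      then show ?thesis using tx by simp
    qed
    have uniq: "t = t'" if "t \<in> T" "t' \<in> T" "D t x \<noteq> 0" "D t' x \<noteq> 0" for t t' x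
    proof (rule ccontr)
      assume "t \<noteq> t'"
      then consider "t < t'" | "t' < t" by fastforce
      then show False
      proof cases
        case 1 then show False using s_le[OF that(2) 1] nz[OF that(3)] nz[OF that(4)] by auto
      next
        case 2 then show False using s_le[OF that(1) 2] nz[OF that(3)] nz[OF that(4)] by auto
      qed
    qed
    have hb: "\<bar>h x\<bar> \<le> 1" for x
    proof (cases "\<exists>t0\<in>T. D t0 x \<noteq> 0")
      case False
      then show ?thesis unfolding h_def by simp
    next
      case True
      then obtain t0 where t0: "t0 \<in> T" "D t0 x \<noteq> 0" by blast
      have "h x = sgn (d t0) * D t0 x + (\<Sum>t\<in>T - {t0}. sgn (d t) * D t x)"
        unfolding h_def using T t0(1) by (simp add: sum.remove)
      also have "(\<Sum>t\<in>T - {t0}. sgn (d t) * D t x) = 0"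
        using uniq t0 by (intro sum.neutral) auto
      finally have "h x = sgn (d t0) * D t0 x" by simp
      moreover have "\<bar>D t0 x\<bar> \<le> 1" using G[of t0] unfolding D_def by auto
      moreover have "\<bar>sgn (d t0)\<bar> \<le> 1" by (simp add: abs_sgn)
      ultimately show ?thesis by (simp add: abs_mult mult_le_one)
    qed
    have "sintegral (\<mu> i) h = (\<Sum>t\<in>T. sgn (d t) * d t)"
      unfolding h_def d_def using sint_sum[OF f1 f2 cpt Dc] .
    also have "\<dots> = (\<Sum>t\<in>T. \<bar>d t\<bar>)" by (intro sum.cong) (auto simp: sgn_if)
    finally have sumd: "(\<Sum>t\<in>T. \<bar>d t\<bar>) \<le> M" using M[OF hc, of i] hb by auto
    have each: "\<bar>F i t\<bar> \<le> 2 * \<delta> + \<bar>d t\<bar>" if t: "t \<in> T" for t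
    proof -
      have dt: "d t = sintegral (\<mu> i) (f t) - sintegral (\<mu> i) (G t)"
        unfolding d_def D_def using sint_diff[OF f1 f2 cpt fc] G[of t] by blast
      have "\<bar>sintegral (\<mu> i) (f t)\<bar> < \<delta>" using iE t unfolding E_def by auto
      then show ?thesis using dt G[of t] by linarith
    qed
    have "(\<Sum>t\<in>T. \<bar>F i t\<bar>) \<le> (\<Sum>t\<in>T. 2 * \<delta> + \<bar>d t\<bar>)" by (intro sum_mono each)
    also have "\<dots> = 2 * (real k * \<delta>) + (\<Sum>t\<in>T. \<bar>d t\<bar>)" by (simp add: sum.distrib k_def)
    also have "\<dots> \<le> M + 2" using k\<delta> sumd by linarith
    finally show ?thesis .
  qed
  have "{i. M + 2 < (\<Sum>t\<in>T. \<bar>F i t\<bar>)} \<subseteq> E" using main by force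
  then show ?thesis using finE finite_subset by blast
qed



theorem corollary2p15:
  fixes F :: "'i \<Rightarrow> 'k::linorder_topology \<Rightarrow> real"
    and \<mu> :: "'i \<Rightarrow> 'k measure \<times> 'k measure"
  assumes "compact_line TYPE('k)"
    and "\<And>i. F i \<in> NBV"
    and "\<And>i. finite_radon (fst (\<mu> i)) \<and> finite_radon (snd (\<mu> i))"
    and "\<And>i. F i = dist_fun (\<mu> i)"
    and "weak_star_null \<mu>"
  shows "\<forall>Q. countable Q \<longrightarrow> type_c0l1 F Q"
proof (intro allI impI)
  fix Q :: "'k set" assume Q: "countable Q"
  have cpt: "compact (UNIV :: 'k set)" using assms(1) unfolding compact_line_def .
  obtain M where M0: "M \<ge> 0" and Mb: "\<forall>i h. continuous_on UNIV h \<longrightarrow> (\<forall>x. \<bar>h x\<bar> \<le> 1) \<longrightarrow> \<bar>sintegral (\<mu> i) h\<bar> \<le> M"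
    using ubound[OF cpt assms(3) assms(5)] by blast
  show "type_c0l1 F Q"
  proof (rule decomp[of "M + 2"])
    show "0 \<le> M + 2" using M0 by simp
    show "finite {i. M + 2 < (\<Sum>t\<in>T. \<bar>F i t\<bar>)}" if "finite T" for T
      by (rule finT[OF cpt assms(3) assms(4) assms(5) _ that]) (use Mb in blast)
  qed (rule Q)
qed

end
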